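(* Let $A\in\mathbb{C}^{n\times n}$, and fix $A^-\in A\{1\}$ and $A^{GD}\in A\{GD\}$. For $X\in\mathbb{C}^{n\times n}$ the following are equivalent: (i) $X = A^{-}AA^{GD}$; (ii) $XA=A^{-}A$ and $N(X)=N(AA^{GD})$; (iii) $XAA^{-}=A^{-}AA^{-}$ and $N(X)=N(AA^{GD})$.
   Context: For $A\in\mathbb{C}^{n\times n}$, $ind(A)$ is the smallest nonnegative integer $k$ with $\mathrm{rank}(A^k)=\mathrm{rank}(A^{k+1})$. $A\{1\}$ is the set of matrices $X$ with $AXA=A$. With $k=ind(A)$, $A\{GD\}$ is the set of G-Drazin inverses of $A$: matrices $X$ with $AXA=A$, $XA^{k+1}=A^k$, $A^{k+1}X=A^k$. $N(\cdot)$ denotes null space. *)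

theory Defs
  imports "HOL-Analysis.Analysis"
begin

primrec mpow :: "'a::field^'n^'n \<Rightarrow> nat \<Rightarrow> 'a^'n^'n" where
  "mpow A 0 = mat 1"
| "mpow A (Suc k) = A ** mpow A k"

definition ind :: "'a::field^'n^'n \<Rightarrow> nat" where
  "ind A = (LEAST k. rank (mpow A k) = rank (mpow A (Suc k)))"

definition inner_inverses :: "'a::field^'n^'n \<Rightarrow> ('a^'n^'n) set" where
  "inner_inverses A = {X. A ** X ** A = A}"

definition gdrazin_inverses :: "'a::field^'n^'n \<Rightarrow> ('a^'n^'n) set" where
  "gdrazin_inverses A = {X. A ** X ** A = A
      \<and> X ** mpow A (Suc (ind A)) = mpow A (ind A)
      \<and> mpow A (Suc (ind A)) ** X = mpow A (ind A)}"

definition null_space :: "'a::field^'n^'m \<Rightarrow> ('a^'n) set" where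
  "null_space M = {x. M *v x = 0}"

end

theory Submission
  imports Defs
begin

lemma main:
  fixes A Am G X :: "'a::field^'n^'n"
  assumes am: "A ** Am ** A = A" and g: "A ** G ** A = A"
  shows "(X = Am ** A ** G
          \<longleftrightarrow> (X ** A = Am ** A \<and> null_space X = null_space (A ** G)))
       \<and> (X = Am ** A ** G
          \<longleftrightarrow> (X ** A ** Am = Am ** A ** Am \<and> null_space X = null_space (A ** G)))"
proof -
  have AX: "A ** (Am ** A ** G) = A ** G"
  proof -
    have "A ** (Am ** A ** G) = (A ** Am ** A) ** G" by (simp only: matrix_mul_assoc)
    thus ?thesis using am by simp
  qed
  have fwd: "null_space (Am ** A ** G) = null_space (A ** G)"
  proof (intro set_eqI iffI)
    fix x assume "x \<in> null_space (Am ** A ** G)"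
    hence "(Am ** A ** G) *v x = 0" by (simp add: null_space_def)
    hence "A *v ((Am ** A ** G) *v x) = 0" by simp
    hence "(A ** G) *v x = 0" by (simp only: matrix_vector_mul_assoc AX)
    thus "x \<in> null_space (A ** G)" by (simp add: null_space_def)
  next
    fix x assume "x \<in> null_space (A ** G)"
    hence "(A ** G) *v x = 0" by (simp add: null_space_def)
    hence "Am *v ((A ** G) *v x) = 0" by simp
    hence "(Am ** (A ** G)) *v x = 0" by (simp only: matrix_vector_mul_assoc)
    thus "x \<in> null_space (Am ** A ** G)" by (simp add: null_space_def matrix_mul_assoc)
  qed
  have XA: "Am ** A ** G ** A = Am ** A"
  proof -
    have "Am ** A ** G ** A = Am ** (A ** G ** A)" by (simp only: matrix_mul_assoc)
    thus ?thesis using g by simp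
  qed
  have AGAG: "(A ** G) ** (A ** G) = A ** G"
  proof -
    have "(A ** G) ** (A ** G) = (A ** G ** A) ** G" by (simp only: matrix_mul_assoc)
    thus ?thesis using g by simp
  qed
  have key: "X = X ** A ** G" if ns: "null_space X = null_space (A ** G)" for X
  proof -
    have "\<forall>v. X *v v = (X ** A ** G) *v v"
    proof
      fix v
      have "(A ** G) *v ((A ** G) *v v) = (A ** G) *v v"
        by (simp only: matrix_vector_mul_assoc AGAG)
      hence "(A ** G) *v (v - (A ** G) *v v) = 0"
        by (simp add: matrix_vector_mult_diff_distrib)
      hence "v - (A ** G) *v v \<in> null_space X" using ns by (simp add: null_space_def)
      hence "X *v (v - (A ** G) *v v) = 0" by (simp add: null_space_def)
      hence "X *v v = X *v ((A ** G) *v v)"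
        by (simp add: matrix_vector_mult_diff_distrib)
      also have "\<dots> = (X ** (A ** G)) *v v" by (simp only: matrix_vector_mul_assoc)
      also have "\<dots> = (X ** A ** G) *v v" by (simp only: matrix_mul_assoc)
      finally show "X *v v = (X ** A ** G) *v v" .
    qed
    thus ?thesis using matrix_eq by blast
  qed
  have XAAm: "X ** A = Am ** A" if h: "X ** A ** Am = Am ** A ** Am" for X
  proof -
    have "X ** A = X ** (A ** Am ** A)" using am by simp
    also have "\<dots> = (X ** A ** Am) ** A" by (simp only: matrix_mul_assoc)
    also have "\<dots> = (Am ** A ** Am) ** A" using h by simp
    also have "\<dots> = Am ** (A ** Am ** A)" by (simp only: matrix_mul_assoc)
    also have "\<dots> = Am ** A" using am by simp
    finally show ?thesis .
  qed
  have i_ii: "X = Am ** A ** G \<longleftrightarrow> (X ** A = Am ** A \<and> null_space X = null_space (A ** G))"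
  proof
    assume "X = Am ** A ** G"
    thus "X ** A = Am ** A \<and> null_space X = null_space (A ** G)" using XA fwd by simp
  next
    assume h: "X ** A = Am ** A \<and> null_space X = null_space (A ** G)"
    hence "X = X ** A ** G" using key by blast
    thus "X = Am ** A ** G" using h by simp
  qed
  have i_iii: "X = Am ** A ** G \<longleftrightarrow> (X ** A ** Am = Am ** A ** Am \<and> null_space X = null_space (A ** G))"
  proof
    assume "X = Am ** A ** G"
    thus "X ** A ** Am = Am ** A ** Am \<and> null_space X = null_space (A ** G)" using XA fwd by simp
  next
    assume h: "X ** A ** Am = Am ** A ** Am \<and> null_space X = null_space (A ** G)"
    thus "X = Am ** A ** G" using i_ii XAAm by blast
  qed
  show ?thesis using i_ii i_iii by blast
qed

theorem theorem3p6:
  fixes A Am Agd X :: "complex^'n^'n"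
  assumes "Am \<in> inner_inverses A"
    and "Agd \<in> gdrazin_inverses A"
  shows "(X = Am ** A ** Agd
          \<longleftrightarrow> (X ** A = Am ** A \<and> null_space X = null_space (A ** Agd)))
       \<and> (X = Am ** A ** Agd
          \<longleftrightarrow> (X ** A ** Am = Am ** A ** Am \<and> null_space X = null_space (A ** Agd)))"
proof -
  have "A ** Am ** A = A" "A ** Agd ** A = A"
    using assms unfolding inner_inverses_def gdrazin_inverses_def by auto
  thus ?thesis using main by blast
qed

end
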